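(* Let $\mathbf A=(A,b,c,V)\in\mathcal B_{\mu,M}(\Omega)$, where $V\in L^1_{\rm loc}(\Omega)$ is nonnegative, let $V_m=\min\{V,m\}$ and $\mathbf A_m=(A,b,c,V_m)$ for $m\in\mathbb N_+$, and let $p\in(1,\infty)$, $q=p/(p-1)$. Then: (i) for every $\varepsilon\in(0,\mu)$ there exists $m_\varepsilon\ge0$ such that $\mathbf A_m\in\mathcal B_{\mu-\varepsilon,M}(\Omega)$ for all $m\ge m_\varepsilon$; (ii) if $\mathbf A\in\mathcal S_p(\Omega)$, then for every $\varepsilon\in(0,\mu_p(\mathbf A))$ there exists $m_{\varepsilon,p}\ge0$ such that $\mathbf A_m\in\mathcal S_p(\Omega)$ and $\mu_p(\mathbf A_m)\ge\mu_p(\mathbf A)-\varepsilon$ for all $m\ge m_{\varepsilon,p}$; moreover $\lim_{m\to\infty}\mu_p(\mathbf A_m)=\mu_p(\mathbf A)$. In particular, if $\mathbf A\in\mathcal B_p(\Omega)$, then $\mathbf A_m\in\mathcal B_p(\Omega)$ for all sufficiently large $m$ (namely $m\ge\max\{m_{\varepsilon,p},m_{\varepsilon,q}\}$).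
   Context: $\Omega\subseteq\mathbb R^d$ nonempty open; $\langle \xi,\sigma\rangle=\sum_j\xi_j\overline{\sigma_j}$. $\mathcal{A}(\Omega)$: measurable $A:\Omega\to\mathbb{C}^{d\times d}$ with $\lambda,\Lambda>0$ such that $\Re\langle A(x)\xi,\xi\rangle\ge\lambda|\xi|^2$, $|\langle A(x)\xi,\sigma\rangle|\le\Lambda|\xi||\sigma|$ a.e. $\mathcal{J}_s\xi=\frac s2(\xi+(1-\frac2s)\overline\xi)$, $\Delta_s(A)=\operatorname{ess\,inf}_{x}\min_{|\xi|=1}\Re\langle A(x)\xi,\xi+|1-2/s|\overline\xi\rangle$, $\mathcal A_s=\{A\in\mathcal A(\Omega):\Delta_s(A)>0\}$, $\Gamma_s^{\mathbf A}(x,\xi)=\Re\langle A\xi,\mathcal J_s\xi\rangle+\Re\langle b+\mathcal J_sc,\xi\rangle+V$, for quadruples $\mathbf A=(A,b,c,V)$ with $A\in\mathcal A(\Omega)$, $b,c\in L^\infty(\Omega;\mathbb C^d)$, $0\le V\in L^1_{\rm loc}(\Omega)$. $\mathcal B_{\mu,M}(\Omega)$ ($\mu\in(0,1]$, $M>0$): such quadruples with $\Gamma_2^{\mathbf A}(x,\xi)\ge\mu(|\xi|^2+V(x))$ and $|b(x)-c(x)|\le M\sqrt{V(x)}$ for a.e. $x$, all $\xi$. $\mathcal S_s(\Omega)$: quadruples with $A\in\mathcal A_s(\Omega)$, $|b-c|\le M'\sqrt V$ a.e. for some $M'>0$, and $\Gamma_s^{\mathbf A}\ge\mu'(|\xi|^2+V)$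 a.e. for some $\mu'>0$; $\mu_s(\mathbf A)$ the largest such $\mu'$. $\mathcal B_p=\mathcal S_p\cap\mathcal S_q$. *)

theory Defs
  imports "HOL-Analysis.Analysis"
begin

text \<open>Complex vectors in C^d are modelled as complex^'n, matrices as complex^'n^'n,
  points of R^d as real^'n; the dimension d = CARD('n) is arbitrary.\<close>

definition cinner :: "complex^'n \<Rightarrow> complex^'n \<Rightarrow> complex" where
  "cinner \<xi> \<sigma> = (\<Sum>j\<in>UNIV. \<xi> $ j * cnj (\<sigma> $ j))"

definition vcnj :: "complex^'n \<Rightarrow> complex^'n" where
  "vcnj \<xi> = (\<chi> j. cnj (\<xi> $ j))"

definition Jop :: "real \<Rightarrow> complex^'n \<Rightarrow> complex^'n" where
  "Jop s \<xi> = (s / 2) *\<^sub>R (\<xi> + (1 - 2 / s) *\<^sub>R vcnj \<xi>)"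

abbreviation AE_on :: "(real^'n) set \<Rightarrow> (real^'n \<Rightarrow> bool) \<Rightarrow> bool" where
  "AE_on \<Omega> P \<equiv> (AE x in lebesgue. x \<in> \<Omega> \<longrightarrow> P x)"

definition ellipticA :: "(real^'n) set \<Rightarrow> (real^'n \<Rightarrow> complex^'n^'n) \<Rightarrow> bool" where
  "ellipticA \<Omega> A \<longleftrightarrow> A \<in> borel_measurable (lebesgue_on \<Omega>) \<and>
     (\<exists>lam>0. \<exists>Lam>0. AE_on \<Omega> (\<lambda>x. \<forall>\<xi> \<sigma>.
        Re (cinner (A x *v \<xi>) \<xi>) \<ge> lam * (norm \<xi>)\<^sup>2 \<and>
        cmod (cinner (A x *v \<xi>) \<sigma>) \<le> Lam * norm \<xi> * norm \<sigma>))"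

text \<open>\<Delta>_s(A) = ess inf over x of min over unit \<xi>; ess inf = sup of a.e. lower bounds\<close>
definition Delta :: "real \<Rightarrow> (real^'n) set \<Rightarrow> (real^'n \<Rightarrow> complex^'n^'n) \<Rightarrow> real" where
  "Delta s \<Omega> A = Sup {\<delta>. AE_on \<Omega> (\<lambda>x. \<forall>\<xi>. norm \<xi> = 1 \<longrightarrow>
      \<delta> \<le> Re (cinner (A x *v \<xi>) (\<xi> + \<bar>1 - 2 / s\<bar> *\<^sub>R vcnj \<xi>)))}"

definition ellipticA_s :: "real \<Rightarrow> (real^'n) set \<Rightarrow> (real^'n \<Rightarrow> complex^'n^'n) \<Rightarrow> bool" where
  "ellipticA_s s \<Omega> A \<longleftrightarrow> ellipticA \<Omega> A \<and> Delta s \<Omega> A > 0"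

definition Linfty :: "(real^'n) set \<Rightarrow> (real^'n \<Rightarrow> complex^'n) \<Rightarrow> bool" where
  "Linfty \<Omega> b \<longleftrightarrow> b \<in> borel_measurable (lebesgue_on \<Omega>) \<and>
     (\<exists>C. AE_on \<Omega> (\<lambda>x. norm (b x) \<le> C))"

definition L1loc :: "(real^'n) set \<Rightarrow> (real^'n \<Rightarrow> real) \<Rightarrow> bool" where
  "L1loc \<Omega> V \<longleftrightarrow> (\<forall>K. compact K \<and> K \<subseteq> \<Omega> \<longrightarrow> set_integrable lebesgue K V)"

definition quadruple ::
  "(real^'n) set \<Rightarrow> (real^'n \<Rightarrow> complex^'n^'n) \<Rightarrow> (real^'n \<Rightarrow> complex^'n) \<Rightarrow>
   (real^'n \<Rightarrow> complex^'n) \<Rightarrow> (real^'n \<Rightarrow> real) \<Rightarrow> bool" where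
  "quadruple \<Omega> A b c V \<longleftrightarrow> ellipticA \<Omega> A \<and> Linfty \<Omega> b \<and> Linfty \<Omega> c \<and>
     L1loc \<Omega> V \<and> AE_on \<Omega> (\<lambda>x. 0 \<le> V x)"

definition Gamma ::
  "real \<Rightarrow> (real^'n \<Rightarrow> complex^'n^'n) \<Rightarrow> (real^'n \<Rightarrow> complex^'n) \<Rightarrow>
   (real^'n \<Rightarrow> complex^'n) \<Rightarrow> (real^'n \<Rightarrow> real) \<Rightarrow> real^'n \<Rightarrow> complex^'n \<Rightarrow> real" where
  "Gamma s A b c V x \<xi> = Re (cinner (A x *v \<xi>) (Jop s \<xi>))
      + Re (cinner (b x + Jop s (c x)) \<xi>) + V x"

definition classB ::
  "real \<Rightarrow> real \<Rightarrow> (real^'n) set \<Rightarrow> (real^'n \<Rightarrow> complex^'n^'n) \<Rightarrow> (real^'n \<Rightarrow> complex^'n) \<Rightarrow>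
   (real^'n \<Rightarrow> complex^'n) \<Rightarrow> (real^'n \<Rightarrow> real) \<Rightarrow> bool" where
  "classB \<mu> M \<Omega> A b c V \<longleftrightarrow> quadruple \<Omega> A b c V \<and>
     AE_on \<Omega> (\<lambda>x. (\<forall>\<xi>. Gamma 2 A b c V x \<xi> \<ge> \<mu> * ((norm \<xi>)\<^sup>2 + V x)) \<and>
                    norm (b x - c x) \<le> M * sqrt (V x))"

definition classS ::
  "real \<Rightarrow> (real^'n) set \<Rightarrow> (real^'n \<Rightarrow> complex^'n^'n) \<Rightarrow> (real^'n \<Rightarrow> complex^'n) \<Rightarrow>
   (real^'n \<Rightarrow> complex^'n) \<Rightarrow> (real^'n \<Rightarrow> real) \<Rightarrow> bool" where
  "classS s \<Omega> A b c V \<longleftrightarrow> quadruple \<Omega> A b c V \<and> ellipticA_s s \<Omega> A \<and>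
     (\<exists>M'>0. AE_on \<Omega> (\<lambda>x. norm (b x - c x) \<le> M' * sqrt (V x))) \<and>
     (\<exists>\<mu>'>0. AE_on \<Omega> (\<lambda>x. \<forall>\<xi>. Gamma s A b c V x \<xi> \<ge> \<mu>' * ((norm \<xi>)\<^sup>2 + V x)))"

definition mu_s ::
  "real \<Rightarrow> (real^'n) set \<Rightarrow> (real^'n \<Rightarrow> complex^'n^'n) \<Rightarrow> (real^'n \<Rightarrow> complex^'n) \<Rightarrow>
   (real^'n \<Rightarrow> complex^'n) \<Rightarrow> (real^'n \<Rightarrow> real) \<Rightarrow> real" where
  "mu_s s \<Omega> A b c V = Sup {\<mu>'. \<mu>' > 0 \<and>
     AE_on \<Omega> (\<lambda>x. \<forall>\<xi>. Gamma s A b c V x \<xi> \<ge> \<mu>' * ((norm \<xi>)\<^sup>2 + V x))}"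

definition classBp ::
  "real \<Rightarrow> (real^'n) set \<Rightarrow> (real^'n \<Rightarrow> complex^'n^'n) \<Rightarrow> (real^'n \<Rightarrow> complex^'n) \<Rightarrow>
   (real^'n \<Rightarrow> complex^'n) \<Rightarrow> (real^'n \<Rightarrow> real) \<Rightarrow> bool" where
  "classBp p \<Omega> A b c V \<longleftrightarrow> classS p \<Omega> A b c V \<and> classS (p / (p - 1)) \<Omega> A b c V"

end

theory Submission
  imports Defs
begin


lemma L1loc_min:
  assumes "L1loc \<Omega> V" shows "L1loc \<Omega> (\<lambda>x. min (V x) (m::real))"
  unfolding L1loc_def
proof (intro allI impI)
  fix K :: "(real^'a) set" assume K: "compact K \<and> K \<subseteq> \<Omega>"
  then have iV: "integrable lebesgue (\<lambda>x. indicator K x * V x)"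
    using assms unfolding L1loc_def set_integrable_def by auto
  have Kl: "K \<in> lmeasurable" using K lmeasurable_compact by blast
  have iC: "integrable lebesgue (\<lambda>x. indicator K x * m)"
    using integrable_real_indicator[of K lebesgue] Kl
    by (intro integrable_mult_left) (auto simp: fmeasurable_def)
  have eq: "(\<lambda>x. indicator K x *\<^sub>R min (V x) m) = (\<lambda>x. (indicator K x * V x + indicator K x * m - \<bar>indicator K x * V x - indicator K x * m\<bar>) / 2)"
    by (auto simp: indicator_def fun_eq_iff min_def)
  show "set_integrable lebesgue K (\<lambda>x. min (V x) m)"
    unfolding set_integrable_def eq
    using iV iC by (intro integrable_divide integrable_diff integrable_add integrable_abs) auto
qed

lemma re_cinner: "Re (cinner u v) = inner u v"
  unfolding cinner_def inner_vec_def inner_complex_def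
  by (simp add: Re_sum)

lemma norm_vcnj[simp]: "norm (vcnj \<xi>) = norm \<xi>"
  unfolding vcnj_def norm_vec_def by simp

lemma vcnj_scale: "vcnj (t *\<^sub>R \<xi>) = t *\<^sub>R vcnj \<xi>"
  unfolding vcnj_def by (simp add: vec_eq_iff)

lemma Jop_scale: "Jop s (t *\<^sub>R \<xi>) = t *\<^sub>R Jop s \<xi>"
  unfolding Jop_def vcnj_scale by (simp add: algebra_simps)

lemma mv_scale: "(A::complex^'n^'n) *v (t *\<^sub>R \<xi>) = t *\<^sub>R (A *v \<xi>)"
  unfolding matrix_vector_mult_def
  by (simp add: vec_eq_iff scaleR_sum_right)

lemma norm_Jop: "norm (Jop s \<xi>) \<le> \<bar>s/2\<bar> * (1 + \<bar>1 - 2/s\<bar>) * norm \<xi>"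
proof -
  have "norm (Jop s \<xi>) = \<bar>s/2\<bar> * norm (\<xi> + (1 - 2 / s) *\<^sub>R vcnj \<xi>)"
    unfolding Jop_def by simp
  also have "\<dots> \<le> \<bar>s/2\<bar> * (norm \<xi> + \<bar>1 - 2/s\<bar> * norm \<xi>)"
    by (intro mult_left_mono order_trans[OF norm_triangle_ineq]) auto
  finally show ?thesis by (simp add: algebra_simps)
qed


lemma pt_quad:
  fixes \<alpha> \<beta> \<gamma> :: real
  assumes "\<forall>t. t*t*\<alpha> + t*\<beta> + \<gamma> \<ge> 0" shows "\<alpha> \<ge> 0"
proof (rule ccontr)
  assume "\<not> \<alpha> \<ge> 0" hence a: "\<alpha> < 0" by simp
  define T where "T = max 1 ((\<bar>\<beta>\<bar> + \<bar>\<gamma>\<bar> + 1) / (-\<alpha>))"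
  have T1: "T \<ge> 1" unfolding T_def by simp
  have T2: "T * (-\<alpha>) \<ge> \<bar>\<beta>\<bar> + \<bar>\<gamma>\<bar> + 1"
    using a unfolding T_def by (simp add: field_simps max_def)
  have "T*T*\<alpha> = - T * (T * (-\<alpha>))" by simp
  also have "\<dots> \<le> - T * (\<bar>\<beta>\<bar> + \<bar>\<gamma>\<bar> + 1)"
    using T1 T2 by (intro mult_left_mono_neg) auto
  finally have "T*T*\<alpha> + T*\<beta> + \<gamma> \<le> - T * (\<bar>\<beta>\<bar> + \<bar>\<gamma>\<bar> + 1) + T*\<bar>\<beta>\<bar> + \<bar>\<gamma>\<bar>"
    using T1 mult_left_mono[OF abs_ge_self[of \<beta>], of T] abs_ge_self[of \<gamma>] by linarith
  also have "\<dots> = - T * (\<bar>\<gamma>\<bar> + 1) + \<bar>\<gamma>\<bar>" by (simp add: algebra_simps)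
  also have "\<dots> < 0" using T1 mult_right_mono[OF T1, of "\<bar>\<gamma>\<bar> + 1"] by simp
  finally show False using assms[rule_format, of T] by linarith
qed

lemma pt_main:
  fixes Qf Lf :: "complex^'n \<Rightarrow> real"
  assumes homQ: "\<And>t \<xi>. Qf (t *\<^sub>R \<xi>) = t*t*Qf \<xi>"
    and homL: "\<And>t \<xi>. Lf (t *\<^sub>R \<xi>) = t * Lf \<xi>"
    and Lb: "\<And>\<xi>. \<bar>Lf \<xi>\<bar> \<le> C * norm \<xi>"
    and hyp: "\<And>\<xi>. Qf \<xi> + Lf \<xi> + v \<ge> \<mu>' * ((norm \<xi>)\<^sup>2 + v)"
    and v0: "v \<ge> 0" and d: "\<delta> > 0" and C: "C \<ge> 0" and m: "m \<ge> C\<^sup>2 / \<delta>\<^sup>2" "m > 0"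
  shows "Qf \<xi> + Lf \<xi> + min v m \<ge> (\<mu>' - \<delta>) * ((norm \<xi>)\<^sup>2 + min v m)"
proof (cases "v \<le> m")
  case True
  have "\<delta> * ((norm \<xi>)\<^sup>2 + v) \<ge> 0" using d v0 by simp
  then show ?thesis using hyp[of \<xi>] True by (simp add: left_diff_distrib)
next
  case False
  have Q0: "Qf 0 = 0" using homQ[of 0 0] by simp
  have L0: "Lf 0 = 0" using homL[of 0 0] by simp
  have "v \<ge> \<mu>' * v" using hyp[of 0] Q0 L0 by simp
  hence mu1: "\<mu>' \<le> 1" using False m by (simp add: mult_le_cancel_right1)
  have "\<forall>t. t*t*(Qf \<xi> - \<mu>' * (norm \<xi>)\<^sup>2) + t*Lf \<xi> + (v - \<mu>' * v) \<ge> 0"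
  proof
    fix t :: real
    have "Qf (t *\<^sub>R \<xi>) + Lf (t *\<^sub>R \<xi>) + v \<ge> \<mu>' * ((norm (t *\<^sub>R \<xi>))\<^sup>2 + v)" by (rule hyp)
    then show "t*t*(Qf \<xi> - \<mu>' * (norm \<xi>)\<^sup>2) + t*Lf \<xi> + (v - \<mu>' * v) \<ge> 0"
      by (simp add: homQ homL power2_eq_square algebra_simps)
  qed
  from pt_quad[OF this] have Qge: "Qf \<xi> \<ge> \<mu>' * (norm \<xi>)\<^sup>2" by simp
  have mv: "min v m = m" using False by simp
  define n where "n = norm \<xi>"
  have n0: "n \<ge> 0" unfolding n_def by simp
  have Lge: "Lf \<xi> \<ge> - C * n" using Lb[of \<xi>] unfolding n_def by linarith
  have dm: "\<delta> * m \<ge> C\<^sup>2 / \<delta>" using m(1) d by (simp add: field_simps power2_eq_square)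
  have sq: "\<delta> * n\<^sup>2 - C * n + C\<^sup>2 / \<delta> \<ge> 0"
  proof -
    have "\<delta> * n\<^sup>2 - C * n + C\<^sup>2 / \<delta> = (\<delta> * n - C/2)\<^sup>2 / \<delta> + 3 * C\<^sup>2 / (4 * \<delta>)"
      using d by (simp add: field_simps power2_eq_square)
    also have "\<dots> \<ge> 0" using d by simp
    finally show ?thesis .
  qed
  have "(\<mu>' - \<delta>) * (n\<^sup>2 + m) \<le> \<mu>' * n\<^sup>2 - C * n + m"
  proof -
    have "(\<mu>' - \<delta>) * (n\<^sup>2 + m) = \<mu>' * n\<^sup>2 - \<delta> * n\<^sup>2 + \<mu>' * m - \<delta> * m" by (simp add: algebra_simps)
    also have "\<dots> \<le> \<mu>' * n\<^sup>2 - \<delta> * n\<^sup>2 + m - \<delta> * m" using mult_right_mono[OF mu1, of m] m(2) by simp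
    finally show ?thesis using sq dm by linarith
  qed
  then show ?thesis unfolding mv using Qge Lge unfolding n_def by linarith
qed


lemma norm_axis_c: "norm (axis i (1::complex)) = 1"
  by (simp add: inner_axis' norm_eq_1)

lemma Gamma_eq: "Gamma s A b c W x \<xi> = Re (cinner (A x *v \<xi>) (Jop s \<xi>)) + Re (cinner (b x + Jop s (c x)) \<xi>) + W x"
  by (simp add: Gamma_def)

lemma homQ: "Re (cinner (A x *v (t *\<^sub>R \<xi>)) (Jop s (t *\<^sub>R \<xi>))) = t*t*Re (cinner (A x *v \<xi>) (Jop s \<xi>))"
  by (simp add: re_cinner mv_scale Jop_scale)

lemma homL: "Re (cinner u (t *\<^sub>R \<xi>)) = t * Re (cinner u \<xi>)"
  by (simp add: re_cinner)

lemma Gamma0: "Gamma s A b c W x 0 = W x"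
  by (simp add: Gamma_def cinner_def Jop_def vcnj_def)

lemma Q_ge:
  assumes "\<forall>\<xi>. Gamma s A b c W x \<xi> \<ge> \<mu>' * ((norm \<xi>)\<^sup>2 + W x)"
  shows "Re (cinner (A x *v \<xi>) (Jop s \<xi>)) \<ge> \<mu>' * (norm \<xi>)\<^sup>2"
proof -
  have "\<forall>t. t*t*(Re (cinner (A x *v \<xi>) (Jop s \<xi>)) - \<mu>' * (norm \<xi>)\<^sup>2)
      + t*Re (cinner (b x + Jop s (c x)) \<xi>) + (W x - \<mu>' * W x) \<ge> 0"
  proof
    fix t :: real
    have "Gamma s A b c W x (t *\<^sub>R \<xi>) \<ge> \<mu>' * ((norm (t *\<^sub>R \<xi>))\<^sup>2 + W x)" using assms by blast
    then show "t*t*(Re (cinner (A x *v \<xi>) (Jop s \<xi>)) - \<mu>' * (norm \<xi>)\<^sup>2)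
      + t*Re (cinner (b x + Jop s (c x)) \<xi>) + (W x - \<mu>' * W x) \<ge> 0"
      unfolding Gamma_eq homQ homL by (simp add: power2_eq_square algebra_simps)
  qed
  from pt_quad[OF this] show ?thesis by simp
qed

lemma ae_Gamma:
  assumes q: "quadruple \<Omega> A b c V"
    and h: "AE_on \<Omega> (\<lambda>x. \<forall>\<xi>. Gamma s A b c V x \<xi> \<ge> \<mu>' * ((norm \<xi>)\<^sup>2 + V x))"
    and d: "\<delta> > 0"
  shows "\<exists>m0::nat. \<forall>m::nat. m \<ge> 1 \<and> m \<ge> m0 \<longrightarrow> AE_on \<Omega> (\<lambda>x. \<forall>\<xi>.
     Gamma s A b c (\<lambda>x. min (V x) (real m)) x \<xi> \<ge> (\<mu>' - \<delta>) * ((norm \<xi>)\<^sup>2 + min (V x) (real m)))"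
proof -
  from q obtain Cb Cc where Cb: "AE_on \<Omega> (\<lambda>x. norm (b x) \<le> Cb)" and Cc: "AE_on \<Omega> (\<lambda>x. norm (c x) \<le> Cc)"
    and V0: "AE_on \<Omega> (\<lambda>x. 0 \<le> V x)"
    unfolding quadruple_def Linfty_def by blast
  define K where "K = \<bar>s/2\<bar> * (1 + \<bar>1 - 2/s\<bar>)"
  have K0: "K \<ge> 0" unfolding K_def by simp
  define C where "C = \<bar>Cb\<bar> + K * \<bar>Cc\<bar>"
  have C0: "C \<ge> 0" unfolding C_def using K0 by simp
  show ?thesis
  proof (intro exI allI impI)
    fix m :: nat assume m: "m \<ge> 1 \<and> m \<ge> nat \<lceil>C\<^sup>2 / \<delta>\<^sup>2\<rceil>"
    have mC: "real m \<ge> C\<^sup>2 / \<delta>\<^sup>2" using m by linarith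
    have mpos: "real m > 0" using m by simp
    show "AE_on \<Omega> (\<lambda>x. \<forall>\<xi>.
     Gamma s A b c (\<lambda>x. min (V x) (real m)) x \<xi> \<ge> (\<mu>' - \<delta>) * ((norm \<xi>)\<^sup>2 + min (V x) (real m)))"
      using h Cb Cc V0
    proof eventually_elim
      case (elim x)
      show ?case
      proof (intro impI allI)
        fix \<xi> assume x: "x \<in> \<Omega>"
        have hx: "\<And>\<xi>. Gamma s A b c V x \<xi> \<ge> \<mu>' * ((norm \<xi>)\<^sup>2 + V x)" using elim x by blast
        have Lb: "\<bar>Re (cinner (b x + Jop s (c x)) \<eta>)\<bar> \<le> C * norm \<eta>" for \<eta>
        proof -
          have "\<bar>Re (cinner (b x + Jop s (c x)) \<eta>)\<bar> \<le> norm (b x + Jop s (c x)) * norm \<eta>"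
            unfolding re_cinner by (rule Cauchy_Schwarz_ineq2)
          also have "norm (b x + Jop s (c x)) \<le> C"
          proof -
            have "norm (b x + Jop s (c x)) \<le> norm (b x) + norm (Jop s (c x))" by (rule norm_triangle_ineq)
            also have "norm (Jop s (c x)) \<le> K * norm (c x)" unfolding K_def by (rule norm_Jop)
            also have "K * norm (c x) \<le> K * \<bar>Cc\<bar>" using elim x K0 by (intro mult_left_mono) auto
            finally show ?thesis using elim x unfolding C_def by auto
          qed
          then have "norm (b x + Jop s (c x)) * norm \<eta> \<le> C * norm \<eta>" by (rule mult_right_mono) simp
          finally show ?thesis .
        qed
        show "Gamma s A b c (\<lambda>x. min (V x) (real m)) x \<xi> \<ge> (\<mu>' - \<delta>) * ((norm \<xi>)\<^sup>2 + min (V x) (real m))"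
          unfolding Gamma_eq
          apply (rule pt_main[where Qf = "\<lambda>\<xi>. Re (cinner (A x *v \<xi>) (Jop s \<xi>))"
                and Lf = "\<lambda>\<xi>. Re (cinner (b x + Jop s (c x)) \<xi>)" and C = C and v = "V x", simplified])
          using homQ homL Lb hx[unfolded Gamma_eq] elim x d C0 mC mpos by auto
      qed
    qed
  qed
qed

lemma ae_bc:
  assumes "Linfty \<Omega> b" "Linfty \<Omega> c" "AE_on \<Omega> (\<lambda>x. norm (b x - c x) \<le> M' * sqrt (V x))" "M' > 0"
  shows "\<exists>m0::nat. \<forall>m::nat. m \<ge> m0 \<longrightarrow> AE_on \<Omega> (\<lambda>x. norm (b x - c x) \<le> M' * sqrt (min (V x) (real m)))"
proof -
  from assms obtain Cb Cc where Cb: "AE_on \<Omega> (\<lambda>x. norm (b x) \<le> Cb)" and Cc: "AE_on \<Omega> (\<lambda>x. norm (c x) \<le> Cc)"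
    unfolding Linfty_def by blast
  define D where "D = \<bar>Cb\<bar> + \<bar>Cc\<bar>"
  show ?thesis
  proof (intro exI allI impI)
    fix m :: nat assume m: "m \<ge> nat \<lceil>(D / M')\<^sup>2\<rceil>"
    have mC: "real m \<ge> (D / M')\<^sup>2" using m by linarith
    hence "D / M' \<le> sqrt (real m)" by (rule real_le_rsqrt)
    hence sm: "D \<le> M' * sqrt (real m)" using assms(4) by (simp add: field_simps)
    show "AE_on \<Omega> (\<lambda>x. norm (b x - c x) \<le> M' * sqrt (min (V x) (real m)))"
      using Cb Cc assms(3)
    proof eventually_elim
      case (elim x)
      show ?case
      proof
        assume x: "x \<in> \<Omega>"
        show "norm (b x - c x) \<le> M' * sqrt (min (V x) (real m))"
        proof (cases "V x \<le> real m")
          case True then show ?thesis using elim x by (simp add: min_def)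
        next
          case False
          have "norm (b x - c x) \<le> norm (b x) + norm (c x)" by (rule norm_triangle_ineq4)
          also have "\<dots> \<le> D" using elim x unfolding D_def by auto
          finally show ?thesis using sm False by (simp add: min_def)
        qed
      qed
    qed
  qed
qed


lemma quad_m:
  assumes "quadruple \<Omega> A b c V" "m \<ge> 0"
  shows "quadruple \<Omega> A b c (\<lambda>x. min (V x) (m::real))"
  using assms L1loc_min unfolding quadruple_def by (auto elim!: AE_mp)

lemma set_mono_m:
  assumes m: "real m \<ge> 1"
  shows "{\<mu>'. \<mu>' > 0 \<and> AE_on \<Omega> (\<lambda>x. \<forall>\<xi>. Gamma s A b c (\<lambda>x. min (V x) (real m)) x \<xi> \<ge> \<mu>' * ((norm \<xi>)\<^sup>2 + min (V x) (real m)))}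
    \<subseteq> {\<mu>'. \<mu>' > 0 \<and> AE_on \<Omega> (\<lambda>x. \<forall>\<xi>. Gamma s A b c V x \<xi> \<ge> \<mu>' * ((norm \<xi>)\<^sup>2 + V x))}"
proof (intro subsetI CollectI conjI)
  fix \<mu>' assume "\<mu>' \<in> {\<mu>'. \<mu>' > 0 \<and> AE_on \<Omega> (\<lambda>x. \<forall>\<xi>. Gamma s A b c (\<lambda>x. min (V x) (real m)) x \<xi> \<ge> \<mu>' * ((norm \<xi>)\<^sup>2 + min (V x) (real m)))}"
  hence p: "\<mu>' > 0" and h: "AE_on \<Omega> (\<lambda>x. \<forall>\<xi>. Gamma s A b c (\<lambda>x. min (V x) (real m)) x \<xi> \<ge> \<mu>' * ((norm \<xi>)\<^sup>2 + min (V x) (real m)))" by auto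
  show "\<mu>' > 0" by fact
  show "AE_on \<Omega> (\<lambda>x. \<forall>\<xi>. Gamma s A b c V x \<xi> \<ge> \<mu>' * ((norm \<xi>)\<^sup>2 + V x))"
    using h
  proof eventually_elim
    case (elim x)
    show ?case
    proof (intro impI allI)
      fix \<xi> assume x: "x \<in> \<Omega>"
      have hx: "\<And>\<xi>. Gamma s A b c (\<lambda>x. min (V x) (real m)) x \<xi> \<ge> \<mu>' * ((norm \<xi>)\<^sup>2 + min (V x) (real m))"
        using elim x by blast
      show "Gamma s A b c V x \<xi> \<ge> \<mu>' * ((norm \<xi>)\<^sup>2 + V x)"
      proof (cases "V x \<le> real m")
        case True
        then show ?thesis using hx[of \<xi>] unfolding Gamma_eq by (simp add: min_def)
      next
        case False
        have "real m \<ge> \<mu>' * real m" using hx[of 0] False unfolding Gamma0 by simp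
        hence mu1: "\<mu>' \<le> 1" using m by (simp add: mult_le_cancel_right1)
        have e: "\<mu>' * (V x - real m) \<le> V x - real m" using False mu1
          by (simp add: mult_left_le_one_le)
        show ?thesis using hx[of \<xi>] False e unfolding Gamma_eq
          by (simp add: min_def algebra_simps)
      qed
    qed
  qed
qed

lemma bdd_mu:
  assumes "open \<Omega>" "\<Omega> \<noteq> {}" "ellipticA \<Omega> A"
  shows "bdd_above {\<mu>'. \<mu>' > 0 \<and> AE_on \<Omega> (\<lambda>x. \<forall>\<xi>. Gamma s A b c V x \<xi> \<ge> \<mu>' * ((norm \<xi>)\<^sup>2 + V x))}"
proof -
  from assms(3) obtain Lam where L: "AE_on \<Omega> (\<lambda>x. \<forall>\<xi> \<sigma>. cmod (cinner (A x *v \<xi>) \<sigma>) \<le> Lam * norm \<xi> * norm \<sigma>)"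
  proof -
    from assms(3) obtain lam Lam where "AE_on \<Omega> (\<lambda>x. \<forall>\<xi> \<sigma>.
        Re (cinner (A x *v \<xi>) \<xi>) \<ge> lam * (norm \<xi>)\<^sup>2 \<and>
        cmod (cinner (A x *v \<xi>) \<sigma>) \<le> Lam * norm \<xi> * norm \<sigma>)"
      unfolding ellipticA_def by blast
    then have "AE_on \<Omega> (\<lambda>x. \<forall>\<xi> \<sigma>. cmod (cinner (A x *v \<xi>) \<sigma>) \<le> Lam * norm \<xi> * norm \<sigma>)"
      by (rule AE_mp) auto
    then show ?thesis using that by blast
  qed
  define K where "K = \<bar>s/2\<bar> * (1 + \<bar>1 - 2/s\<bar>)"
  show ?thesis unfolding bdd_above_def
  proof (intro exI ballI)
    fix \<mu>' assume "\<mu>' \<in> {\<mu>'. \<mu>' > 0 \<and> AE_on \<Omega> (\<lambda>x. \<forall>\<xi>. Gamma s A b c V x \<xi> \<ge> \<mu>' * ((norm \<xi>)\<^sup>2 + V x))}"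
    hence h: "AE_on \<Omega> (\<lambda>x. \<forall>\<xi>. Gamma s A b c V x \<xi> \<ge> \<mu>' * ((norm \<xi>)\<^sup>2 + V x))" by auto
    show "\<mu>' \<le> \<bar>Lam\<bar> * K"
    proof (rule ccontr)
      assume c: "\<not> \<mu>' \<le> \<bar>Lam\<bar> * K"
      obtain i :: 'a where True by simp
      let ?e = "axis i (1::complex)"
      have "AE_on \<Omega> (\<lambda>x. False)"
        using h L
      proof eventually_elim
        case (elim x)
        show ?case
        proof
          assume x: "x \<in> \<Omega>"
          have "Re (cinner (A x *v ?e) (Jop s ?e)) \<ge> \<mu>' * (norm ?e)\<^sup>2"
            using Q_ge elim x by blast
          hence "\<mu>' \<le> Re (cinner (A x *v ?e) (Jop s ?e))" by (simp add: norm_axis_c)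
          also have "\<dots> \<le> cmod (cinner (A x *v ?e) (Jop s ?e))" by (rule complex_Re_le_cmod)
          also have "\<dots> \<le> Lam * norm ?e * norm (Jop s ?e)" using elim x by blast
          also have "\<dots> \<le> \<bar>Lam\<bar> * norm (Jop s ?e)" by (simp add: norm_axis_c mult_right_mono)
          also have "\<dots> \<le> \<bar>Lam\<bar> * K" unfolding K_def using norm_Jop[of s ?e]
            by (intro mult_left_mono) (auto simp: norm_axis_c)
          finally show False using c by simp
        qed
      qed
      then obtain N where N: "{x \<in> space lebesgue. \<not> (x \<in> \<Omega> \<longrightarrow> False)} \<subseteq> N"
          "emeasure lebesgue N = 0" "N \<in> sets lebesgue"
        by (rule AE_E)
      have "\<Omega> \<subseteq> N" using N(1) by auto
      moreover have "\<Omega> \<in> sets lebesgue" using assms(1) by simp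
      moreover have "N \<in> null_sets lebesgue" using N(2,3) by (simp add: null_sets_def)
      ultimately have "\<Omega> \<in> null_sets lebesgue" using null_sets_subset by blast
      hence "negligible \<Omega>" by (simp add: negligible_iff_null_sets)
      with open_not_negligible[OF assms(1,2)] show False by simp
    qed
  qed
qed


lemma partii_step:
  assumes "open \<Omega>" "\<Omega> \<noteq> {}" and S: "classS s \<Omega> A b c V"
  shows "\<forall>\<epsilon>. 0 < \<epsilon> \<and> \<epsilon> < mu_s s \<Omega> A b c V \<longrightarrow>
           (\<exists>m0::nat. \<forall>m::nat. m \<ge> 1 \<and> m \<ge> m0 \<longrightarrow>
              classS s \<Omega> A b c (\<lambda>x. min (V x) (real m)) \<and>
              mu_s s \<Omega> A b c (\<lambda>x. min (V x) (real m)) \<ge> mu_s s \<Omega> A b c V - \<epsilon> \<and>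
              mu_s s \<Omega> A b c (\<lambda>x. min (V x) (real m)) \<le> mu_s s \<Omega> A b c V)"
proof (intro allI impI)
  fix \<epsilon> :: real assume e: "0 < \<epsilon> \<and> \<epsilon> < mu_s s \<Omega> A b c V"
  define S where "S = {\<mu>'. \<mu>' > 0 \<and> AE_on \<Omega> (\<lambda>x. \<forall>\<xi>. Gamma s A b c V x \<xi> \<ge> \<mu>' * ((norm \<xi>)\<^sup>2 + V x))}"
  define Sm where "Sm = (\<lambda>m::nat. {\<mu>'. \<mu>' > 0 \<and> AE_on \<Omega> (\<lambda>x. \<forall>\<xi>. Gamma s A b c (\<lambda>x. min (V x) (real m)) x \<xi> \<ge> \<mu>' * ((norm \<xi>)\<^sup>2 + min (V x) (real m)))})"
  have q: "quadruple \<Omega> A b c V" and eA: "ellipticA_s s \<Omega> A" using S unfolding classS_def by auto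
  from S obtain M' where M': "M' > 0" "AE_on \<Omega> (\<lambda>x. norm (b x - c x) \<le> M' * sqrt (V x))"
    unfolding classS_def by blast
  have bdd: "bdd_above S" unfolding S_def
    by (rule bdd_mu) (use assms eA in \<open>auto simp: ellipticA_s_def\<close>)
  have ne: "S \<noteq> {}" using S unfolding classS_def S_def by auto
  have muS: "mu_s s \<Omega> A b c V = Sup S" unfolding mu_s_def S_def by simp
  have "Sup S - \<epsilon>/2 < Sup S" using e by simp
  then obtain \<mu>1 where mu1: "\<mu>1 \<in> S" "Sup S - \<epsilon>/2 < \<mu>1" using less_cSup_iff[OF ne bdd] by blast
  have h1: "AE_on \<Omega> (\<lambda>x. \<forall>\<xi>. Gamma s A b c V x \<xi> \<ge> \<mu>1 * ((norm \<xi>)\<^sup>2 + V x))" using mu1 unfolding S_def by auto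
  obtain m1 :: nat where m1: "\<forall>m::nat. m \<ge> 1 \<and> m \<ge> m1 \<longrightarrow> AE_on \<Omega> (\<lambda>x. \<forall>\<xi>.
     Gamma s A b c (\<lambda>x. min (V x) (real m)) x \<xi> \<ge> (\<mu>1 - \<epsilon>/2) * ((norm \<xi>)\<^sup>2 + min (V x) (real m)))"
    using ae_Gamma[OF q h1, of "\<epsilon>/2"] e by auto
  obtain m2 :: nat where m2: "\<forall>m::nat. m \<ge> m2 \<longrightarrow> AE_on \<Omega> (\<lambda>x. norm (b x - c x) \<le> M' * sqrt (min (V x) (real m)))"
    using ae_bc[OF _ _ M'(2) M'(1)] q unfolding quadruple_def by blast
  show "\<exists>m0::nat. \<forall>m::nat. m \<ge> 1 \<and> m \<ge> m0 \<longrightarrow>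
              classS s \<Omega> A b c (\<lambda>x. min (V x) (real m)) \<and>
              mu_s s \<Omega> A b c (\<lambda>x. min (V x) (real m)) \<ge> mu_s s \<Omega> A b c V - \<epsilon> \<and>
              mu_s s \<Omega> A b c (\<lambda>x. min (V x) (real m)) \<le> mu_s s \<Omega> A b c V"
  proof (intro exI allI impI)
    fix m :: nat assume m: "m \<ge> 1 \<and> m \<ge> max m1 m2"
    have pos: "\<mu>1 - \<epsilon>/2 > 0" using mu1(2) e muS by simp
    have inSm: "\<mu>1 - \<epsilon>/2 \<in> Sm m" unfolding Sm_def using m1 m pos by auto
    have sub: "Sm m \<subseteq> S" unfolding Sm_def S_def by (rule set_mono_m) (use m in simp)
    have muSm: "mu_s s \<Omega> A b c (\<lambda>x. min (V x) (real m)) = Sup (Sm m)" unfolding mu_s_def Sm_def by simp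
    have "classS s \<Omega> A b c (\<lambda>x. min (V x) (real m))"
      unfolding classS_def
    proof (intro conjI)
      show "quadruple \<Omega> A b c (\<lambda>x. min (V x) (real m))" using quad_m[OF q, of "real m"] by simp
      show "ellipticA_s s \<Omega> A" by fact
      show "\<exists>M'>0. AE_on \<Omega> (\<lambda>x. norm (b x - c x) \<le> M' * sqrt (min (V x) (real m)))"
        using M'(1) m2 m by auto
      show "\<exists>\<mu>'>0. AE_on \<Omega> (\<lambda>x. \<forall>\<xi>. Gamma s A b c (\<lambda>x. min (V x) (real m)) x \<xi> \<ge> \<mu>' * ((norm \<xi>)\<^sup>2 + min (V x) (real m)))"
        using inSm unfolding Sm_def by blast
    qed
    moreover have "Sup (Sm m) \<ge> \<mu>1 - \<epsilon>/2"
      by (rule cSup_upper[OF inSm bdd_above_mono[OF bdd sub]])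
    moreover have "Sup (Sm m) \<le> Sup S" using inSm sub bdd by (intro cSup_subset_mono) auto
    ultimately show "classS s \<Omega> A b c (\<lambda>x. min (V x) (real m)) \<and>
              mu_s s \<Omega> A b c (\<lambda>x. min (V x) (real m)) \<ge> mu_s s \<Omega> A b c V - \<epsilon> \<and>
              mu_s s \<Omega> A b c (\<lambda>x. min (V x) (real m)) \<le> mu_s s \<Omega> A b c V"
      using muS muSm mu1(2) by auto
  qed
qed

lemma mu_pos:
  assumes "open \<Omega>" "\<Omega> \<noteq> {}" and S: "classS s \<Omega> A b c V"
  shows "mu_s s \<Omega> A b c V > 0"
proof -
  define S where "S = {\<mu>'. \<mu>' > 0 \<and> AE_on \<Omega> (\<lambda>x. \<forall>\<xi>. Gamma s A b c V x \<xi> \<ge> \<mu>' * ((norm \<xi>)\<^sup>2 + V x))}"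
  have bdd: "bdd_above S" unfolding S_def
    by (rule bdd_mu) (use assms in \<open>auto simp: ellipticA_s_def classS_def\<close>)
  from S obtain \<mu>' where "\<mu>' \<in> S" unfolding classS_def S_def by auto
  moreover have "mu_s s \<Omega> A b c V = Sup S" unfolding mu_s_def S_def by simp
  ultimately show ?thesis using cSup_upper[OF _ bdd] unfolding S_def
    by (metis (no_types, lifting) mem_Collect_eq order_less_le_trans)
qed

lemma partii:
  assumes "open \<Omega>" "\<Omega> \<noteq> {}" and S: "classS s \<Omega> A b c V"
  shows "(\<forall>\<epsilon>. 0 < \<epsilon> \<and> \<epsilon> < mu_s s \<Omega> A b c V \<longrightarrow>
           (\<exists>m0::nat. \<forall>m::nat. m \<ge> 1 \<and> m \<ge> m0 \<longrightarrow>
              classS s \<Omega> A b c (\<lambda>x. min (V x) (real m)) \<and>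
              mu_s s \<Omega> A b c (\<lambda>x. min (V x) (real m)) \<ge> mu_s s \<Omega> A b c V - \<epsilon>))
        \<and> (\<lambda>m. mu_s s \<Omega> A b c (\<lambda>x. min (V x) (real m))) \<longlonglongrightarrow> mu_s s \<Omega> A b c V"
proof
  note st = partii_step[OF assms]
  show "\<forall>\<epsilon>. 0 < \<epsilon> \<and> \<epsilon> < mu_s s \<Omega> A b c V \<longrightarrow>
           (\<exists>m0::nat. \<forall>m::nat. m \<ge> 1 \<and> m \<ge> m0 \<longrightarrow>
              classS s \<Omega> A b c (\<lambda>x. min (V x) (real m)) \<and>
              mu_s s \<Omega> A b c (\<lambda>x. min (V x) (real m)) \<ge> mu_s s \<Omega> A b c V - \<epsilon>)"
    using st by blast
  have mp: "mu_s s \<Omega> A b c V > 0" by (rule mu_pos[OF assms])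
  show "(\<lambda>m. mu_s s \<Omega> A b c (\<lambda>x. min (V x) (real m))) \<longlonglongrightarrow> mu_s s \<Omega> A b c V"
  proof (rule LIMSEQ_I)
    fix r :: real assume r: "0 < r"
    define e where "e = min (r/2) (mu_s s \<Omega> A b c V / 2)"
    have e: "0 < e \<and> e < mu_s s \<Omega> A b c V" using r mp unfolding e_def by auto
    from st[rule_format, OF e] obtain m0 :: nat where m0: "\<forall>m::nat. m \<ge> 1 \<and> m \<ge> m0 \<longrightarrow>
              mu_s s \<Omega> A b c (\<lambda>x. min (V x) (real m)) \<ge> mu_s s \<Omega> A b c V - e \<and>
              mu_s s \<Omega> A b c (\<lambda>x. min (V x) (real m)) \<le> mu_s s \<Omega> A b c V" by blast
    show "\<exists>no. \<forall>n\<ge>no. norm (mu_s s \<Omega> A b c (\<lambda>x. min (V x) (real n)) - mu_s s \<Omega> A b c V) < r"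
    proof (intro exI allI impI)
      fix n :: nat assume "n \<ge> max 1 m0"
      then have "mu_s s \<Omega> A b c (\<lambda>x. min (V x) (real n)) \<ge> mu_s s \<Omega> A b c V - e \<and>
              mu_s s \<Omega> A b c (\<lambda>x. min (V x) (real n)) \<le> mu_s s \<Omega> A b c V" using m0 by auto
      moreover have "e < r" using r unfolding e_def by auto
      ultimately show "norm (mu_s s \<Omega> A b c (\<lambda>x. min (V x) (real n)) - mu_s s \<Omega> A b c V) < r"
        by auto
    qed
  qed
qed


theorem lemmaC1:
  fixes \<Omega> :: "(real^'n) set"
    and A :: "real^'n \<Rightarrow> complex^'n^'n"
    and b c :: "real^'n \<Rightarrow> complex^'n"
    and V :: "real^'n \<Rightarrow> real"
    and \<mu> M p q :: real
  assumes "open \<Omega>" and "\<Omega> \<noteq> {}"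
    and "0 < \<mu>" and "\<mu> \<le> 1" and "0 < M"
    and hB: "classB \<mu> M \<Omega> A b c V"
    and "1 < p" and q_def: "q = p / (p - 1)"
  defines "Vm \<equiv> (\<lambda>(m::nat) x. min (V x) (real m))"
  shows
    "(\<forall>\<epsilon>. 0 < \<epsilon> \<and> \<epsilon> < \<mu> \<longrightarrow>
        (\<exists>m0::nat. \<forall>m::nat. m \<ge> 1 \<and> m \<ge> m0 \<longrightarrow> classB (\<mu> - \<epsilon>) M \<Omega> A b c (Vm m)))
   \<and> (classS p \<Omega> A b c V \<longrightarrow>
        (\<forall>\<epsilon>. 0 < \<epsilon> \<and> \<epsilon> < mu_s p \<Omega> A b c V \<longrightarrow>
           (\<exists>m0::nat. \<forall>m::nat. m \<ge> 1 \<and> m \<ge> m0 \<longrightarrow>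
              classS p \<Omega> A b c (Vm m) \<and>
              mu_s p \<Omega> A b c (Vm m) \<ge> mu_s p \<Omega> A b c V - \<epsilon>))
        \<and> (\<lambda>m. mu_s p \<Omega> A b c (Vm m)) \<longlonglongrightarrow> mu_s p \<Omega> A b c V)
   \<and> (classS p \<Omega> A b c V \<and> classS q \<Omega> A b c V \<longrightarrow>
        (\<exists>m0::nat. \<forall>m::nat. m \<ge> 1 \<and> m \<ge> m0 \<longrightarrow> classBp p \<Omega> A b c (Vm m)))"
proof -
  have q: "quadruple \<Omega> A b c V" using hB unfolding classB_def by simp
  have hG: "AE_on \<Omega> (\<lambda>x. \<forall>\<xi>. Gamma 2 A b c V x \<xi> \<ge> \<mu> * ((norm \<xi>)\<^sup>2 + V x))"
    using hB unfolding classB_def by (auto elim!: AE_mp)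
  have hbc: "AE_on \<Omega> (\<lambda>x. norm (b x - c x) \<le> M * sqrt (V x))"
    using hB unfolding classB_def by (auto elim!: AE_mp)
  have P1: "\<forall>\<epsilon>. 0 < \<epsilon> \<and> \<epsilon> < \<mu> \<longrightarrow>
        (\<exists>m0::nat. \<forall>m::nat. m \<ge> 1 \<and> m \<ge> m0 \<longrightarrow> classB (\<mu> - \<epsilon>) M \<Omega> A b c (\<lambda>x. min (V x) (real m)))"
  proof (intro allI impI)
    fix \<epsilon> :: real assume e: "0 < \<epsilon> \<and> \<epsilon> < \<mu>"
    obtain m1 :: nat where m1: "\<forall>m::nat. m \<ge> 1 \<and> m \<ge> m1 \<longrightarrow> AE_on \<Omega> (\<lambda>x. \<forall>\<xi>.
       Gamma 2 A b c (\<lambda>x. min (V x) (real m)) x \<xi> \<ge> (\<mu> - \<epsilon>) * ((norm \<xi>)\<^sup>2 + min (V x) (real m)))"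
      using ae_Gamma[OF q hG, of \<epsilon>] e by auto
    obtain m2 :: nat where m2: "\<forall>m::nat. m \<ge> m2 \<longrightarrow> AE_on \<Omega> (\<lambda>x. norm (b x - c x) \<le> M * sqrt (min (V x) (real m)))"
      using ae_bc[OF _ _ hbc \<open>0 < M\<close>] q unfolding quadruple_def by blast
    show "\<exists>m0::nat. \<forall>m::nat. m \<ge> 1 \<and> m \<ge> m0 \<longrightarrow> classB (\<mu> - \<epsilon>) M \<Omega> A b c (\<lambda>x. min (V x) (real m))"
    proof (intro exI allI impI)
      fix m :: nat assume m: "m \<ge> 1 \<and> m \<ge> max m1 m2"
      have a1: "AE_on \<Omega> (\<lambda>x. \<forall>\<xi>.
       Gamma 2 A b c (\<lambda>x. min (V x) (real m)) x \<xi> \<ge> (\<mu> - \<epsilon>) * ((norm \<xi>)\<^sup>2 + min (V x) (real m)))"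
        using m1 m by auto
      have a2: "AE_on \<Omega> (\<lambda>x. norm (b x - c x) \<le> M * sqrt (min (V x) (real m)))" using m2 m by auto
      have "AE_on \<Omega> (\<lambda>x. (\<forall>\<xi>. Gamma 2 A b c (\<lambda>x. min (V x) (real m)) x \<xi> \<ge> (\<mu> - \<epsilon>) * ((norm \<xi>)\<^sup>2 + min (V x) (real m))) \<and>
                    norm (b x - c x) \<le> M * sqrt (min (V x) (real m)))"
        using a1 a2 by eventually_elim auto
      then show "classB (\<mu> - \<epsilon>) M \<Omega> A b c (\<lambda>x. min (V x) (real m))"
        unfolding classB_def using quad_m[OF q, of "real m"] by simp
    qed
  qed
  have P2: "classS p \<Omega> A b c V \<longrightarrow>
        (\<forall>\<epsilon>. 0 < \<epsilon> \<and> \<epsilon> < mu_s p \<Omega> A b c V \<longrightarrow>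
           (\<exists>m0::nat. \<forall>m::nat. m \<ge> 1 \<and> m \<ge> m0 \<longrightarrow>
              classS p \<Omega> A b c (\<lambda>x. min (V x) (real m)) \<and>
              mu_s p \<Omega> A b c (\<lambda>x. min (V x) (real m)) \<ge> mu_s p \<Omega> A b c V - \<epsilon>))
        \<and> (\<lambda>m. mu_s p \<Omega> A b c (\<lambda>x. min (V x) (real m))) \<longlonglongrightarrow> mu_s p \<Omega> A b c V"
    using partii[OF \<open>open \<Omega>\<close> \<open>\<Omega> \<noteq> {}\<close>] by blast
  have ev: "\<exists>m0::nat. \<forall>m::nat. m \<ge> 1 \<and> m \<ge> m0 \<longrightarrow> classS s \<Omega> A b c (\<lambda>x. min (V x) (real m))"
    if "classS s \<Omega> A b c V" for s
  proof -
    have mp: "mu_s s \<Omega> A b c V > 0" by (rule mu_pos[OF \<open>open \<Omega>\<close> \<open>\<Omega> \<noteq> {}\<close> that])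
    have "0 < mu_s s \<Omega> A b c V / 2 \<and> mu_s s \<Omega> A b c V / 2 < mu_s s \<Omega> A b c V" using mp by simp
    then show ?thesis using partii[OF \<open>open \<Omega>\<close> \<open>\<Omega> \<noteq> {}\<close> that] by blast
  qed
  have P3: "classS p \<Omega> A b c V \<and> classS q \<Omega> A b c V \<longrightarrow>
        (\<exists>m0::nat. \<forall>m::nat. m \<ge> 1 \<and> m \<ge> m0 \<longrightarrow> classBp p \<Omega> A b c (\<lambda>x. min (V x) (real m)))"
  proof
    assume "classS p \<Omega> A b c V \<and> classS q \<Omega> A b c V"
    then obtain m1 m2 :: nat where m1: "\<forall>m::nat. m \<ge> 1 \<and> m \<ge> m1 \<longrightarrow> classS p \<Omega> A b c (\<lambda>x. min (V x) (real m))"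
      and m2: "\<forall>m::nat. m \<ge> 1 \<and> m \<ge> m2 \<longrightarrow> classS q \<Omega> A b c (\<lambda>x. min (V x) (real m))"
      using ev by meson
    show "\<exists>m0::nat. \<forall>m::nat. m \<ge> 1 \<and> m \<ge> m0 \<longrightarrow> classBp p \<Omega> A b c (\<lambda>x. min (V x) (real m))"
      by (rule exI[of _ "max m1 m2"]) (use m1 m2 in \<open>auto simp: classBp_def q_def\<close>)
  qed
  show ?thesis unfolding Vm_def using P1 P2 P3 by simp
qed

end
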